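(* Let $\lambda=(\lambda_1,\ldots,\lambda_\ell)$ be a partition with $\ell$ positive parts, and let $n\geq\ell$. If there exists $p\in\{1,\ldots,\ell-2\}$ such that $\lambda_p\geq\lambda_{p+1}\geq\lambda_{p+2}+2$, then the poset $\mathcal B_\lambda^n$ is not a lattice.
   Context: For $N\geq 1$ and a partition $\nu$ with at most $N$ positive parts, $\mathcal B_\nu^N$ is the set of semistandard Young tableaux of shape $\nu$ (rows weakly increasing, columns strictly increasing) with entries in $\{1,\ldots,N+1\}$, partially ordered by the reflexive transitive closure of $T<F_i(T)$ for $i\in\{1,\ldots,N\}$ with $F_i(T)\neq 0$. Here $F_i$ is the type A crystal lowering operator: in the reading word of $T$ (rows read from bottom to top, each row left to right) keep only letters $i$ and $i+1$, replace each $i$ by ")" and each $i+1$ by "(", and match parentheses in the usual way; if there is no unmatched ")", $F_i(T)=0$; otherwise $F_i(T)$ is obtained by changing the entry $i$ corresponding to the rightmost unmatched ")" into $i+1$. *)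

theory Defs
  imports Main
begin

definition is_partition :: "nat list \<Rightarrow> bool" where
  "is_partition lam \<longleftrightarrow> (\<forall>x\<in>set lam. 0 < x) \<and> sorted_wrt (\<ge>) lam"

text \<open>Tableaux are lists of rows (row 0 is the top row), each row a list of entries.\<close>
definition is_ssyt :: "nat \<Rightarrow> nat list \<Rightarrow> nat list list \<Rightarrow> bool" where
  "is_ssyt N nu T \<longleftrightarrow>
     map length T = nu \<and>
     (\<forall>r<length T. sorted (T ! r)) \<and>
     (\<forall>r. Suc r < length T \<longrightarrow> (\<forall>j<length (T ! Suc r). T ! r ! j < T ! Suc r ! j)) \<and>
     (\<forall>row\<in>set T. \<forall>x\<in>set row. 1 \<le> x \<and> x \<le> N + 1)"

definition B :: "nat list \<Rightarrow> nat \<Rightarrow> nat list list set" where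
  "B nu N = {T. is_ssyt N nu T}"

definition reading_word :: "nat list list \<Rightarrow> nat list" where
  "reading_word T = concat (rev T)"

text \<open>Positions of the unmatched letters i (``)'') in a word, where i+1 is ``(''.
  c counts currently unmatched ``('', k is the current position.\<close>
fun unmatched :: "nat \<Rightarrow> nat \<Rightarrow> nat \<Rightarrow> nat list \<Rightarrow> nat list" where
  "unmatched i c k [] = []"
| "unmatched i c k (x # xs) =
     (if x = i then (if 0 < c then unmatched i (c - 1) (Suc k) xs
                     else k # unmatched i c (Suc k) xs)
      else if x = Suc i then unmatched i (Suc c) (Suc k) xs
      else unmatched i c (Suc k) xs)"

definition F_word :: "nat \<Rightarrow> nat list \<Rightarrow> nat list option" where
  "F_word i w = (let u = unmatched i 0 0 w in
     if u = [] then None else Some (w[last u := Suc i]))"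

fun split_lens :: "nat list \<Rightarrow> 'a list \<Rightarrow> 'a list list" where
  "split_lens [] w = []"
| "split_lens (n # ns) w = take n w # split_lens ns (drop n w)"

text \<open>Crystal lowering operator F_i on tableaux; None represents 0.\<close>
definition F :: "nat \<Rightarrow> nat list list \<Rightarrow> nat list list option" where
  "F i T = (case F_word i (reading_word T) of
      None \<Rightarrow> None
    | Some w \<Rightarrow> Some (rev (split_lens (map length (rev T)) w)))"

definition crystal_step :: "nat \<Rightarrow> nat list list \<Rightarrow> nat list list \<Rightarrow> bool" where
  "crystal_step N T T' \<longleftrightarrow> (\<exists>i\<in>{1..N}. F i T = Some T')"

definition crystal_le :: "nat \<Rightarrow> nat list list \<Rightarrow> nat list list \<Rightarrow> bool" where
  "crystal_le N = (crystal_step N)\<^sup>*\<^sup>*"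

definition is_lattice :: "'a set \<Rightarrow> ('a \<Rightarrow> 'a \<Rightarrow> bool) \<Rightarrow> bool" where
  "is_lattice A le \<longleftrightarrow>
     (\<forall>x\<in>A. \<forall>y\<in>A.
        (\<exists>s\<in>A. le x s \<and> le y s \<and> (\<forall>z\<in>A. le x z \<and> le y z \<longrightarrow> le s z)) \<and>
        (\<exists>m\<in>A. le m x \<and> le m y \<and> (\<forall>z\<in>A. le z x \<and> le z y \<longrightarrow> le z m)))"

end

theory Submission
  imports Defs
begin

fun st :: "nat \<Rightarrow> nat \<Rightarrow> nat list \<Rightarrow> nat" where
  "st i c [] = c"
| "st i c (x # xs) =
     (if x = i then (if 0 < c then st i (c - 1) xs else st i c xs)
      else if x = Suc i then st i (Suc c) xs
      else st i c xs)"

lemma unmatched_append: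
  "unmatched i c k (xs @ ys) = unmatched i c k xs @ unmatched i (st i c xs) (k + length xs) ys"
  by (induction xs arbitrary: c k) auto

lemma st_append: "st i c (xs @ ys) = st i (st i c xs) ys"
  by (induction xs arbitrary: c) auto

lemma unmatched_shift0: "unmatched i c (k + m) w = map ((+) m) (unmatched i c k w)"
proof (induction w arbitrary: c k)
  case Nil then show ?case by simp
next
  case (Cons x w)
  have h: "\<And>c. unmatched i c (Suc (k + m)) w = map ((+) m) (unmatched i c (Suc k) w)"
    using Cons.IH[of _ "Suc k"] by simp
  show ?case by (simp add: h)
qed

lemma unmatched_shift: "unmatched i c k w = map ((+) k) (unmatched i c 0 w)"
  using unmatched_shift0[of i c 0 k w] by simp

lemma unmatched_noi: "i \<notin> set w \<Longrightarrow> unmatched i c k w = []"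
  by (induction w arbitrary: c k) auto

lemma st_none: "i \<notin> set w \<Longrightarrow> Suc i \<notin> set w \<Longrightarrow> st i c w = c"
  by (induction w arbitrary: c) auto

lemma unmatched_rep_i: "unmatched i c k (replicate m i) = [k + c..<k + m]"
proof (induction m arbitrary: c k)
  case 0 then show ?case by simp
next
  case (Suc m)
  show ?case
  proof (cases "0 < c")
    case True
    then show ?thesis using Suc by simp
  next
    case False
    then show ?thesis using Suc by (simp add: upt_conv_Cons)
  qed
qed

lemma st_rep_i: "st i c (replicate m i) = c - m"
  by (induction m arbitrary: c) auto

lemma unmatched_rep_Si: "unmatched i c k (replicate m (Suc i)) = []"
  by (induction m arbitrary: c k) auto

lemma st_rep_Si: "st i c (replicate m (Suc i)) = c + m"
  by (induction m arbitrary: c) auto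

lemma unm_prop: "j \<in> set (unmatched i c k w) \<Longrightarrow> k \<le> j \<and> j < k + length w \<and> w ! (j - k) = i"
proof (induction w arbitrary: c k)
  case Nil then show ?case by simp
next
  case (Cons x w)
  show ?case
  proof (cases "x = i")
    case True
    then show ?thesis using Cons
      by (cases "0 < c") (auto dest!: Cons.IH simp: nth_Cons' split: if_splits)
  next
    case False
    then show ?thesis using Cons
      by (auto dest!: Cons.IH simp: nth_Cons' split: if_splits)
  qed
qed

lemma concat_split_lens: "concat (split_lens ns w) = take (sum_list ns) w"
  by (induction ns arbitrary: w) (auto simp: take_add)

lemma split_lens_concat: "split_lens (map length Ts) (concat Ts) = Ts"
  by (induction Ts) auto


definition cnt :: "nat \<Rightarrow> nat list list \<Rightarrow> nat" where
  "cnt k T = length (filter (\<lambda>x. k \<le> x) (concat (rev T)))"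

definition tot :: "nat list list \<Rightarrow> nat" where
  "tot T = sum_list (concat (rev T))"

lemma F_SomeD:
  assumes "F i T = Some T'"
  shows "\<exists>j. j < length (concat (rev T)) \<and> concat (rev T) ! j = i \<and>
           concat (rev T') = (concat (rev T))[j := Suc i]"
proof -
  define w where "w = concat (rev T)"
  define u where "u = unmatched i 0 0 w"
  have uT: "u \<noteq> [] \<and> T' = rev (split_lens (map length (rev T)) (w[last u := Suc i]))"
    using assms unfolding u_def
    by (auto simp: F_def F_word_def reading_word_def w_def Let_def split: option.splits if_splits)
  then have u: "u \<noteq> []" and T': "T' = rev (split_lens (map length (rev T)) (w[last u := Suc i]))"
    by auto
  have "last u \<in> set (unmatched i 0 0 w)" using u u_def by simp
  from unm_prop[OF this] have j: "last u < length w" "w ! last u = i" by auto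
  have "concat (rev T') = take (sum_list (map length (rev T))) (w[last u := Suc i])"
    by (simp add: T' concat_split_lens)
  also have "\<dots> = w[last u := Suc i]"
    by (simp add: w_def length_concat[symmetric])
  finally show ?thesis using j w_def by blast
qed

lemma filter_upd:
  assumes "j < length w"
  shows "length (filter P (w[j := v])) + (if P (w ! j) then 1 else 0) =
         length (filter P w) + (if P v then 1 else 0)"
proof -
  have "w[j := v] = take j w @ v # drop (Suc j) w" using assms by (rule upd_conv_take_nth_drop)
  then have e1: "length (filter P (w[j := v])) = length (filter P (take j w)) + (if P v then 1 else 0) + length (filter P (drop (Suc j) w))"
    by simp
  have "length (filter P w) = length (filter P (take j w @ w ! j # drop (Suc j) w))"
    using id_take_nth_drop[OF assms] by (rule arg_cong)
  also have "\<dots> = length (filter P (take j w)) + (if P (w ! j) then 1 else 0) + length (filter P (drop (Suc j) w))"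
    by simp
  finally show ?thesis using e1 by simp
qed

lemma sum_upd:
  assumes "j < length w"
  shows "sum_list (w[j := v]) + w ! j = sum_list w + (v::nat)"
proof -
  have "w[j := v] = take j w @ v # drop (Suc j) w" using assms by (rule upd_conv_take_nth_drop)
  then have e1: "sum_list (w[j := v]) = sum_list (take j w) + v + sum_list (drop (Suc j) w)"
    by simp
  have "sum_list w = sum_list (take j w @ w ! j # drop (Suc j) w)"
    using id_take_nth_drop[OF assms] by (rule arg_cong)
  also have "\<dots> = sum_list (take j w) + w ! j + sum_list (drop (Suc j) w)"
    by simp
  finally show ?thesis using e1 by simp
qed

lemma F_cnt:
  assumes "F i T = Some T'"
  shows "cnt k T' = cnt k T + (if k = Suc i then 1 else 0)" "tot T' = Suc (tot T)"
proof -
  obtain j where j: "j < length (concat (rev T))" "concat (rev T) ! j = i"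
    "concat (rev T') = (concat (rev T))[j := Suc i]" using F_SomeD[OF assms] by blast
  show "cnt k T' = cnt k T + (if k = Suc i then 1 else 0)"
  proof -
    have "cnt k T' + (if k \<le> i then 1 else 0) = cnt k T + (if k \<le> Suc i then 1 else 0)"
      using filter_upd[OF j(1), of "\<lambda>x. k \<le> x" "Suc i"] j(2,3) unfolding cnt_def
      by simp
    then show ?thesis by (cases "k \<le> i"; cases "k = Suc i") auto
  qed
  show "tot T' = Suc (tot T)"
    using sum_upd[OF j(1), of "Suc i"] j(2,3) unfolding tot_def by simp
qed

lemma step_cnt:
  assumes "crystal_step N T T'"
  shows "cnt k T \<le> cnt k T'" "\<exists>k. cnt k T < cnt k T'" "tot T' = Suc (tot T)"
proof -
  obtain i where "F i T = Some T'" using assms unfolding crystal_step_def by blast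
  note h = F_cnt[OF this]
  show "cnt k T \<le> cnt k T'" using h(1)[of k] by simp
  show "\<exists>k. cnt k T < cnt k T'" using h(1)[of "Suc i"] by (intro exI[of _ "Suc i"]) simp
  show "tot T' = Suc (tot T)" using h(2) .
qed

lemma pow_cnt:
  assumes "(crystal_step N ^^ m) T T'"
  shows "(\<forall>k. cnt k T \<le> cnt k T') \<and> tot T' = tot T + m \<and> (0 < m \<longrightarrow> (\<exists>k. cnt k T < cnt k T'))"
  using assms
proof (induction m arbitrary: T)
  case 0 then show ?case by simp
next
  case (Suc m)
  then obtain S where S: "crystal_step N T S" "(crystal_step N ^^ m) S T'"
    by (metis relpowp_Suc_D2)
  note IH = Suc.IH[OF S(2)]
  note st = step_cnt[OF S(1)]
  show ?case
  proof (intro conjI allI impI)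
    fix k show "cnt k T \<le> cnt k T'" using IH st(1)[of k] by (meson le_trans)
  next
    show "tot T' = tot T + Suc m" using IH st(3) by simp
  next
    obtain k where "cnt k T < cnt k S" using st(2) by blast
    then show "\<exists>k. cnt k T < cnt k T'" using IH by (meson less_le_trans)
  qed
qed

lemma le_cnt:
  assumes "crystal_le N T T'"
  shows "\<exists>m. (crystal_step N ^^ m) T T' \<and> (\<forall>k. cnt k T \<le> cnt k T') \<and> tot T' = tot T + m \<and>
     (0 < m \<longrightarrow> (\<exists>k. cnt k T < cnt k T'))"
proof -
  obtain m where "(crystal_step N ^^ m) T T'"
    using assms unfolding crystal_le_def by (metis rtranclp_imp_relpowp)
  then show ?thesis using pow_cnt by blast
qed


lemma F_split:
  assumes "unmatched i 0 0 (concat (rev D) @ R @ concat (rev U)) \<noteq> []"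
    "last (unmatched i 0 0 (concat (rev D) @ R @ concat (rev U))) = length (concat (rev D)) + j"
    "j < length R"
  shows "F i (U @ R # D) = Some (U @ R[j := Suc i] # D)"
proof -
  have rw: "reading_word (U @ R # D) = concat (rev D) @ R @ concat (rev U)"
    by (simp add: reading_word_def)
  have upd: "(concat (rev D) @ R @ concat (rev U))[length (concat (rev D)) + j := Suc i]
      = concat (rev (U @ R[j := Suc i] # D))"
    using assms(3) by (simp add: list_update_append)
  have ml: "map length (rev (U @ R # D)) = map length (rev (U @ R[j := Suc i] # D))" by simp
  show ?thesis
    unfolding F_def F_word_def rw Let_def using assms(1)
    by (simp only: assms(2) upd ml split_lens_concat if_False option.case rev_rev_ident)
qed

definition yrow :: "nat list \<Rightarrow> nat \<Rightarrow> nat list" where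
  "yrow lam r = replicate (lam ! r) (Suc r)"

definition mk :: "nat list \<Rightarrow> nat \<Rightarrow> nat list \<Rightarrow> nat list \<Rightarrow> nat list list" where
  "mk lam p R0 R1 = map (yrow lam) [0..<p - 1] @ R0 # R1 # map (yrow lam) [Suc p..<length lam]"

definition Pw :: "nat list \<Rightarrow> nat \<Rightarrow> nat list" where
  "Pw lam p = concat (rev (map (yrow lam) [Suc p..<length lam]))"

definition Qw :: "nat list \<Rightarrow> nat \<Rightarrow> nat list" where
  "Qw lam p = concat (rev (map (yrow lam) [0..<p - 1]))"

lemma Qw_less: "x \<in> set (Qw lam p) \<Longrightarrow> x < p"
  by (auto simp: Qw_def yrow_def split: if_splits)

lemma Qw_unm: "p \<le> i \<Longrightarrow> unmatched i c k (Qw lam p) = []"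
  by (rule unmatched_noi) (use Qw_less in fastforce)

lemma F_r1:
  assumes "p \<le> i" "unmatched i (st i 0 (Pw lam p)) 0 R1 \<noteq> []"
    "last (unmatched i (st i 0 (Pw lam p)) 0 R1) = j" "j < length R1"
    "unmatched i (st i (st i 0 (Pw lam p)) R1) 0 R0 = []"
  shows "F i (mk lam p R0 R1) = Some (mk lam p R0 (R1[j := Suc i]))"
proof -
  define U where "U = map (yrow lam) [0..<p - 1] @ [R0]"
  define D where "D = map (yrow lam) [Suc p..<length lam]"
  have mk: "\<And>R. mk lam p R0 R = U @ R # D" by (simp add: mk_def U_def D_def)
  have cU: "concat (rev U) = R0 @ Qw lam p" by (simp add: U_def Qw_def)
  have cD: "concat (rev D) = Pw lam p" by (simp add: D_def Pw_def)
  have e: "unmatched i 0 0 (Pw lam p @ R1 @ concat (rev U)) =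
     unmatched i 0 0 (Pw lam p) @ map ((+) (length (Pw lam p))) (unmatched i (st i 0 (Pw lam p)) 0 R1)"
    unfolding cU cD unmatched_append st_append
    using assms(5) Qw_unm[OF assms(1)]
    by (simp add: unmatched_shift[of _ _ "length (Pw lam p)"] unmatched_shift[of _ _ "_ + _" R0])
  show ?thesis unfolding mk
    apply (rule F_split) unfolding cD e using assms(2,3,4) by (simp_all add: last_map)
qed

lemma F_r0:
  assumes "p \<le> i" "unmatched i (st i (st i 0 (Pw lam p)) R1) 0 R0 \<noteq> []"
    "last (unmatched i (st i (st i 0 (Pw lam p)) R1) 0 R0) = j" "j < length R0"
  shows "F i (mk lam p R0 R1) = Some (mk lam p (R0[j := Suc i]) R1)"
proof -
  define U where "U = map (yrow lam) [0..<p - 1]"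
  define D where "D = R1 # map (yrow lam) [Suc p..<length lam]"
  have mk: "\<And>R. mk lam p R R1 = U @ R # D" by (simp add: mk_def U_def D_def)
  have cU: "concat (rev U) = Qw lam p" by (simp add: U_def Qw_def)
  have cD: "concat (rev D) = Pw lam p @ R1" by (simp add: D_def Pw_def)
  have e: "unmatched i 0 0 ((Pw lam p @ R1) @ R0 @ concat (rev U)) =
     unmatched i 0 0 (Pw lam p @ R1) @ map ((+) (length (Pw lam p @ R1))) (unmatched i (st i (st i 0 (Pw lam p)) R1) 0 R0)"
  proof -
    have "unmatched i 0 0 ((Pw lam p @ R1) @ R0 @ concat (rev U)) =
      unmatched i 0 0 (Pw lam p @ R1) @ unmatched i (st i 0 (Pw lam p @ R1)) (length (Pw lam p @ R1)) (R0 @ Qw lam p)"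
      unfolding cU by (simp only: unmatched_append[of i 0 0 "Pw lam p @ R1"] add_0)
    also have "unmatched i (st i 0 (Pw lam p @ R1)) (length (Pw lam p @ R1)) (R0 @ Qw lam p)
       = unmatched i (st i 0 (Pw lam p @ R1)) (length (Pw lam p @ R1)) R0"
      by (simp only: unmatched_append Qw_unm[OF assms(1)] append_Nil2)
    also have "\<dots> = map ((+) (length (Pw lam p @ R1))) (unmatched i (st i (st i 0 (Pw lam p)) R1) 0 R0)"
      by (simp only: st_append unmatched_shift[of _ _ "length (Pw lam p @ R1)"])
    finally show ?thesis .
  qed
  show ?thesis unfolding mk
    apply (rule F_split) unfolding cD e using assms(2,3,4) by (simp_all add: last_map)
qed


lemma Pw_split:
  assumes "Suc p < length lam"
  shows "Pw lam p = concat (rev (map (yrow lam) [Suc (Suc p)..<length lam])) @ yrow lam (Suc p)"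
  using assms by (simp add: Pw_def upt_conv_Cons)

lemma Pw_ge: "x \<in> set (Pw lam p) \<Longrightarrow> Suc (Suc p) \<le> x"
  by (auto simp: Pw_def yrow_def split: if_splits)

lemma rest_ge: "x \<in> set (concat (rev (map (yrow lam) [q..<length lam]))) \<Longrightarrow> Suc q \<le> x"
  by (auto simp: yrow_def split: if_splits)

lemma st_Pw0: "st p c (Pw lam p) = c"
  by (rule st_none) (use Pw_ge in fastforce)+

lemma st_Pw1:
  assumes "Suc p < length lam"
  shows "st (Suc p) 0 (Pw lam p) = lam ! Suc p"
proof -
  have "st (Suc p) 0 (concat (rev (map (yrow lam) [Suc (Suc p)..<length lam]))) = 0"
    by (rule st_none) (use rest_ge in fastforce)+
  then show ?thesis using assms by (simp add: Pw_split st_append yrow_def st_rep_Si)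
qed

lemma st_Pw2:
  assumes "Suc p < length lam" "is_partition lam"
  shows "st (Suc (Suc p)) 0 (Pw lam p) = 0"
proof (cases "Suc (Suc p) < length lam")
  case True
  have so: "lam ! Suc (Suc p) \<le> lam ! Suc p"
    using assms(2) True unfolding is_partition_def by (auto dest: sorted_wrt_nth_less)
  have sp: "concat (rev (map (yrow lam) [Suc (Suc p)..<length lam])) =
     concat (rev (map (yrow lam) [Suc (Suc (Suc p))..<length lam])) @ yrow lam (Suc (Suc p))"
    using True by (simp add: upt_conv_Cons)
  have "st (Suc (Suc p)) 0 (concat (rev (map (yrow lam) [Suc (Suc (Suc p))..<length lam]))) = 0"
    by (rule st_none) (use rest_ge in fastforce)+
  then show ?thesis using assms so
    by (simp add: Pw_split sp st_append yrow_def st_rep_Si st_rep_i)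
next
  case False
  then have "length lam = Suc (Suc p)" using assms by simp
  then show ?thesis by (simp add: Pw_def yrow_def st_rep_i)
qed


lemma st_rep_other: "v \<noteq> i \<Longrightarrow> v \<noteq> Suc i \<Longrightarrow> st i c (replicate m v) = c"
  by (rule st_none) auto

lemma rep_upd_last0: "(replicate (Suc j) v)[j := w] = replicate j v @ [w]"
  by (induction j) auto

lemma rep_upd_last: "Suc j = m \<Longrightarrow> (replicate m v)[j := w] = replicate j v @ [w]"
  by (erule subst) (rule rep_upd_last0)

lemma last_upt': "a < b \<Longrightarrow> last [a..<b] = b - 1"
  by (cases b) auto

context
  fixes lam :: "nat list" and p :: nat
  assumes part: "is_partition lam" and p1: "1 \<le> p" and pl: "Suc p < length lam"
    and L01: "lam ! p \<le> lam ! (p - 1)" and L12: "lam ! Suc p + 2 \<le> lam ! p"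
begin

lemmas sims = unmatched_rep_i st_rep_i unmatched_rep_Si st_rep_Si unmatched_append st_append
  st_Pw0 st_Pw1[OF pl] st_Pw2[OF pl part] last_upt' rep_upd_last list_update_append st_rep_other

lemma ar: "lam ! p - Suc 0 - (lam ! p - 2) = 1" "lam ! p - 2 < lam ! p - Suc 0"
  "Suc (lam ! p - 2) = lam ! p - Suc 0" "\<not> lam ! p - Suc 0 < lam ! p - 2"
  using L12 by auto

lemma L2pos: "0 < lam ! Suc p"
  using part pl unfolding is_partition_def by auto

lemma step1: "F (Suc p) (mk lam p (replicate (lam ! (p - 1)) p) (replicate (lam ! p) (Suc p)))
  = Some (mk lam p (replicate (lam ! (p - 1)) p) (replicate (lam ! p - 1) (Suc p) @ [Suc (Suc p)]))"
proof -
  have "F (Suc p) (mk lam p (replicate (lam ! (p - 1)) p) (replicate (lam ! p) (Suc p)))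
    = Some (mk lam p (replicate (lam ! (p - 1)) p) ((replicate (lam ! p) (Suc p))[lam ! p - 1 := Suc (Suc p)]))"
    by (rule F_r1) (use L12 in \<open>simp_all add: sims unmatched_noi\<close>)
  then show ?thesis using L12 by (simp add: sims)
qed


lemma step2: "F (Suc (Suc p)) (mk lam p (replicate (lam ! (p - 1)) p) (replicate (lam ! p - 1) (Suc p) @ [Suc (Suc p)])) = Some (mk lam p (replicate (lam ! (p - 1)) p) (replicate (lam ! p - 1) (Suc p) @ [Suc (Suc (Suc p))]))"
proof -
  have "F (Suc (Suc p)) (mk lam p (replicate (lam ! (p - 1)) p) (replicate (lam ! p - 1) (Suc p) @ [Suc (Suc p)])) = Some (mk lam p (replicate (lam ! (p - 1)) p) ((replicate (lam ! p - 1) (Suc p) @ [Suc (Suc p)])[lam ! p - 1 := Suc (Suc (Suc p))]))"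
    by (rule F_r1) (use L12 L01 L2pos in \<open>simp_all add: sims unmatched_noi\<close>)
  then show ?thesis using L12 L01 L2pos by (simp add: sims ar)
qed

lemma step3: "F (p) (mk lam p (replicate (lam ! (p - 1)) p) (replicate (lam ! p - 1) (Suc p) @ [Suc (Suc p)])) = Some (mk lam p (replicate (lam ! (p - 1) - 1) p @ [Suc p]) (replicate (lam ! p - 1) (Suc p) @ [Suc (Suc p)]))"
proof -
  have "F (p) (mk lam p (replicate (lam ! (p - 1)) p) (replicate (lam ! p - 1) (Suc p) @ [Suc (Suc p)])) = Some (mk lam p ((replicate (lam ! (p - 1)) p)[lam ! (p - 1) - 1 := Suc (p)]) (replicate (lam ! p - 1) (Suc p) @ [Suc (Suc p)]))"
    by (rule F_r0) (use L12 L01 L2pos in \<open>simp_all add: sims unmatched_noi\<close>)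
  then show ?thesis using L12 L01 L2pos by (simp add: sims ar)
qed

lemma step4: "F (p) (mk lam p (replicate (lam ! (p - 1)) p) (replicate (lam ! p - 1) (Suc p) @ [Suc (Suc (Suc p))])) = Some (mk lam p (replicate (lam ! (p - 1) - 1) p @ [Suc p]) (replicate (lam ! p - 1) (Suc p) @ [Suc (Suc (Suc p))]))"
proof -
  have "F (p) (mk lam p (replicate (lam ! (p - 1)) p) (replicate (lam ! p - 1) (Suc p) @ [Suc (Suc (Suc p))])) = Some (mk lam p ((replicate (lam ! (p - 1)) p)[lam ! (p - 1) - 1 := Suc (p)]) (replicate (lam ! p - 1) (Suc p) @ [Suc (Suc (Suc p))]))"
    by (rule F_r0) (use L12 L01 L2pos in \<open>simp_all add: sims unmatched_noi\<close>)
  then show ?thesis using L12 L01 L2pos by (simp add: sims ar)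
qed

lemma step5: "F (Suc (Suc p)) (mk lam p (replicate (lam ! (p - 1) - 1) p @ [Suc p]) (replicate (lam ! p - 1) (Suc p) @ [Suc (Suc p)])) = Some (mk lam p (replicate (lam ! (p - 1) - 1) p @ [Suc p]) (replicate (lam ! p - 1) (Suc p) @ [Suc (Suc (Suc p))]))"
proof -
  have "F (Suc (Suc p)) (mk lam p (replicate (lam ! (p - 1) - 1) p @ [Suc p]) (replicate (lam ! p - 1) (Suc p) @ [Suc (Suc p)])) = Some (mk lam p (replicate (lam ! (p - 1) - 1) p @ [Suc p]) ((replicate (lam ! p - 1) (Suc p) @ [Suc (Suc p)])[lam ! p - 1 := Suc (Suc (Suc p))]))"
    by (rule F_r1) (use L12 L01 L2pos in \<open>simp_all add: sims unmatched_noi\<close>)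
  then show ?thesis using L12 L01 L2pos by (simp add: sims ar)
qed

lemma step6: "F (Suc p) (mk lam p (replicate (lam ! (p - 1)) p) (replicate (lam ! p - 1) (Suc p) @ [Suc (Suc (Suc p))])) = Some (mk lam p (replicate (lam ! (p - 1)) p) (replicate (lam ! p - 2) (Suc p) @ [Suc (Suc p), Suc (Suc (Suc p))]))"
proof -
  have "F (Suc p) (mk lam p (replicate (lam ! (p - 1)) p) (replicate (lam ! p - 1) (Suc p) @ [Suc (Suc (Suc p))])) = Some (mk lam p (replicate (lam ! (p - 1)) p) ((replicate (lam ! p - 1) (Suc p) @ [Suc (Suc (Suc p))])[lam ! p - 2 := Suc (Suc p)]))"
    by (rule F_r1) (use L12 L01 L2pos in \<open>simp_all add: sims unmatched_noi\<close>)
  then show ?thesis using L12 L01 L2pos by (simp add: sims ar)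
qed

lemma step7: "F (p) (mk lam p (replicate (lam ! (p - 1)) p) (replicate (lam ! p - 2) (Suc p) @ [Suc (Suc p), Suc (Suc (Suc p))])) = Some (mk lam p (replicate (lam ! (p - 1) - 1) p @ [Suc p]) (replicate (lam ! p - 2) (Suc p) @ [Suc (Suc p), Suc (Suc (Suc p))]))"
proof -
  have "F (p) (mk lam p (replicate (lam ! (p - 1)) p) (replicate (lam ! p - 2) (Suc p) @ [Suc (Suc p), Suc (Suc (Suc p))])) = Some (mk lam p ((replicate (lam ! (p - 1)) p)[lam ! (p - 1) - 1 := Suc (p)]) (replicate (lam ! p - 2) (Suc p) @ [Suc (Suc p), Suc (Suc (Suc p))]))"
    by (rule F_r0) (use L12 L01 L2pos in \<open>simp_all add: sims unmatched_noi\<close>)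
  then show ?thesis using L12 L01 L2pos by (simp add: sims ar)
qed

lemma step8: "F (Suc p) (mk lam p (replicate (lam ! (p - 1) - 1) p @ [Suc p]) (replicate (lam ! p - 1) (Suc p) @ [Suc (Suc p)])) = Some (mk lam p (replicate (lam ! (p - 1) - 1) p @ [Suc p]) (replicate (lam ! p - 2) (Suc p) @ [Suc (Suc p), Suc (Suc p)]))"
proof -
  have "F (Suc p) (mk lam p (replicate (lam ! (p - 1) - 1) p @ [Suc p]) (replicate (lam ! p - 1) (Suc p) @ [Suc (Suc p)])) = Some (mk lam p (replicate (lam ! (p - 1) - 1) p @ [Suc p]) ((replicate (lam ! p - 1) (Suc p) @ [Suc (Suc p)])[lam ! p - 2 := Suc (Suc p)]))"
    by (rule F_r1) (use L12 L01 L2pos in \<open>simp_all add: sims unmatched_noi\<close>)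
  then show ?thesis using L12 L01 L2pos by (simp add: sims ar)
qed

lemma step9: "F (Suc (Suc p)) (mk lam p (replicate (lam ! (p - 1) - 1) p @ [Suc p]) (replicate (lam ! p - 2) (Suc p) @ [Suc (Suc p), Suc (Suc p)])) = Some (mk lam p (replicate (lam ! (p - 1) - 1) p @ [Suc p]) (replicate (lam ! p - 2) (Suc p) @ [Suc (Suc p), Suc (Suc (Suc p))]))"
proof -
  have "F (Suc (Suc p)) (mk lam p (replicate (lam ! (p - 1) - 1) p @ [Suc p]) (replicate (lam ! p - 2) (Suc p) @ [Suc (Suc p), Suc (Suc p)])) = Some (mk lam p (replicate (lam ! (p - 1) - 1) p @ [Suc p]) ((replicate (lam ! p - 2) (Suc p) @ [Suc (Suc p), Suc (Suc p)])[lam ! p - 1 := Suc (Suc (Suc p))]))"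
    by (rule F_r1) (use L12 L01 L2pos in \<open>simp_all add: sims unmatched_noi\<close>)
  then show ?thesis using L12 L01 L2pos by (simp add: sims ar)
qed

lemma step10: "F (Suc p) (mk lam p (replicate (lam ! (p - 1) - 1) p @ [Suc p]) (replicate (lam ! p - 1) (Suc p) @ [Suc (Suc (Suc p))])) = Some (mk lam p (replicate (lam ! (p - 1) - 1) p @ [Suc (Suc p)]) (replicate (lam ! p - 1) (Suc p) @ [Suc (Suc (Suc p))]))"
proof -
  have "F (Suc p) (mk lam p (replicate (lam ! (p - 1) - 1) p @ [Suc p]) (replicate (lam ! p - 1) (Suc p) @ [Suc (Suc (Suc p))])) = Some (mk lam p ((replicate (lam ! (p - 1) - 1) p @ [Suc p])[lam ! (p - 1) - 1 := Suc (Suc p)]) (replicate (lam ! p - 1) (Suc p) @ [Suc (Suc (Suc p))]))"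
    by (rule F_r0) (use L12 L01 L2pos in \<open>simp_all add: sims unmatched_noi\<close>)
  then show ?thesis using L12 L01 L2pos by (simp add: sims ar)
qed


lemma lam_mono: "i \<le> j \<Longrightarrow> j < length lam \<Longrightarrow> lam ! j \<le> lam ! i"
proof (cases "i = j")
  case False
  assume "i \<le> j" "j < length lam"
  then have "i < j" using False by simp
  then show ?thesis using part \<open>j < length lam\<close> unfolding is_partition_def
    by (metis sorted_wrt_nth_less)
qed simp

lemma length_mk: "length (mk lam p R0 R1) = length lam"
  using p1 pl by (simp add: mk_def)

lemma nth_mk: "r < length lam \<Longrightarrow> mk lam p R0 R1 ! r =
   (if r = p - 1 then R0 else if r = p then R1 else yrow lam r)"
  using p1 pl by (auto simp: mk_def nth_append nth_Cons' split: if_splits)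

lemma mk_ssyt:
  assumes "length lam \<le> n" "length R0 = lam ! (p - 1)" "length R1 = lam ! p"
    "sorted R0" "sorted R1" "\<forall>x\<in>set R0. p \<le> x \<and> x \<le> n + 1"
    "\<forall>x\<in>set R1. p \<le> x \<and> x \<le> n + 1"
    "\<forall>j<length R1. R0 ! j < R1 ! j" "\<forall>j<lam ! Suc p. R1 ! j < Suc (Suc p)"
  shows "is_ssyt n lam (mk lam p R0 R1)"
  unfolding is_ssyt_def
proof (intro conjI allI impI ballI)
  show "map length (mk lam p R0 R1) = lam"
    by (rule nth_equalityI) (use assms(2,3) in \<open>auto simp: length_mk nth_mk yrow_def\<close>)
next
  fix r assume "r < length (mk lam p R0 R1)"
  then show "sorted (mk lam p R0 R1 ! r)"
    using assms(4,5) by (auto simp: length_mk nth_mk yrow_def)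
next
  fix r j assume r: "Suc r < length (mk lam p R0 R1)" and j: "j < length (mk lam p R0 R1 ! Suc r)"
  have r': "Suc r < length lam" using r by (simp add: length_mk)
  have jr: "j < lam ! r" using j r' lam_mono[of r "Suc r"]
    by (simp add: length_mk nth_mk yrow_def assms(2,3) split: if_splits)
  consider "Suc r = p - 1" | "r = p - 1" | "r = p" | "Suc r \<noteq> p - 1" "r \<noteq> p - 1" "r \<noteq> p" by blast
  then show "mk lam p R0 R1 ! r ! j < mk lam p R0 R1 ! Suc r ! j"
  proof cases
    case 1
    then have "r \<noteq> p - 1" "r \<noteq> p" "Suc r \<noteq> p" using p1 by auto
    moreover have "j < length R0" using j 1 r' by (simp add: nth_mk)
    moreover have "R0 ! j \<in> set R0" using \<open>j < length R0\<close> by simp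
    ultimately show ?thesis using 1 r' jr assms(6) p1 by (fastforce simp: nth_mk yrow_def)
  next
    case 2
    then have "Suc r = p" using p1 by simp
    then show ?thesis using 2 r' j assms(8) p1 by (auto simp: nth_mk)
  next
    case 3
    then show ?thesis using r' j assms(9) p1 by (auto simp: nth_mk yrow_def)
  next
    case 4
    then have "Suc r \<noteq> p" using p1 by auto
    then show ?thesis using 4 r' j jr by (auto simp: nth_mk yrow_def)
  qed
next
  fix row x assume "row \<in> set (mk lam p R0 R1)" "x \<in> set row"
  then obtain r where r: "r < length lam" "row = mk lam p R0 R1 ! r"
    by (auto simp: in_set_conv_nth length_mk)
  then show "1 \<le> x" using \<open>x \<in> set row\<close> assms(1,6,7) p1
    by (auto simp: nth_mk yrow_def split: if_splits)
next
  fix row x assume "row \<in> set (mk lam p R0 R1)" "x \<in> set row"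
  then obtain r where r: "r < length lam" "row = mk lam p R0 R1 ! r"
    by (auto simp: in_set_conv_nth length_mk)
  then show "x \<le> n + 1" using \<open>x \<in> set row\<close> assms(1,6,7) p1
    by (auto simp: nth_mk yrow_def split: if_splits)
qed


lemma memx: assumes "length lam \<le> n" shows "mk lam p (replicate (lam ! (p - 1)) p) (replicate (lam ! p - 1) (Suc p) @ [Suc (Suc (Suc p))]) \<in> B lam n"
  unfolding B_def mem_Collect_eq
  by (rule mk_ssyt) (use assms L12 L01 L2pos pl in \<open>auto simp: nth_append sorted_append nth_Cons' split: if_splits\<close>)

lemma memy: assumes "length lam \<le> n" shows "mk lam p (replicate (lam ! (p - 1) - 1) p @ [Suc p]) (replicate (lam ! p - 1) (Suc p) @ [Suc (Suc p)]) \<in> B lam n"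
  unfolding B_def mem_Collect_eq
  by (rule mk_ssyt) (use assms L12 L01 L2pos pl in \<open>auto simp: nth_append sorted_append nth_Cons' split: if_splits\<close>)

lemma memz1: assumes "length lam \<le> n" shows "mk lam p (replicate (lam ! (p - 1) - 1) p @ [Suc p]) (replicate (lam ! p - 2) (Suc p) @ [Suc (Suc p), Suc (Suc (Suc p))]) \<in> B lam n"
  unfolding B_def mem_Collect_eq
  by (rule mk_ssyt) (use assms L12 L01 L2pos pl in \<open>auto simp: nth_append sorted_append nth_Cons' split: if_splits\<close>)

lemma memz2: assumes "length lam \<le> n" shows "mk lam p (replicate (lam ! (p - 1) - 1) p @ [Suc p]) (replicate (lam ! p - 1) (Suc p) @ [Suc (Suc (Suc p))]) \<in> B lam n"
  unfolding B_def mem_Collect_eq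
  by (rule mk_ssyt) (use assms L12 L01 L2pos pl in \<open>auto simp: nth_append sorted_append nth_Cons' split: if_splits\<close>)

lemma nolat:
  assumes n: "length lam \<le> n"
  shows "\<not> is_lattice (B lam n) (crystal_le n)"
proof
  assume lat: "is_lattice (B lam n) (crystal_le n)"
  define Y where "Y = mk lam p (replicate (lam ! (p - 1)) p) (replicate (lam ! p) (Suc p))"
  define A where "A = mk lam p (replicate (lam ! (p - 1)) p) (replicate (lam ! p - 1) (Suc p) @ [Suc (Suc p)])"
  define x where "x = mk lam p (replicate (lam ! (p - 1)) p) (replicate (lam ! p - 1) (Suc p) @ [Suc (Suc (Suc p))])"
  define y where "y = mk lam p (replicate (lam ! (p - 1) - 1) p @ [Suc p]) (replicate (lam ! p - 1) (Suc p) @ [Suc (Suc p)])"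
  define z2 where "z2 = mk lam p (replicate (lam ! (p - 1) - 1) p @ [Suc p]) (replicate (lam ! p - 1) (Suc p) @ [Suc (Suc (Suc p))])"
  define x' where "x' = mk lam p (replicate (lam ! (p - 1)) p) (replicate (lam ! p - 2) (Suc p) @ [Suc (Suc p), Suc (Suc (Suc p))])"
  define z1 where "z1 = mk lam p (replicate (lam ! (p - 1) - 1) p @ [Suc p]) (replicate (lam ! p - 2) (Suc p) @ [Suc (Suc p), Suc (Suc (Suc p))])"
  define y' where "y' = mk lam p (replicate (lam ! (p - 1) - 1) p @ [Suc p]) (replicate (lam ! p - 2) (Suc p) @ [Suc (Suc p), Suc (Suc p)])"
  define W where "W = mk lam p (replicate (lam ! (p - 1) - 1) p @ [Suc (Suc p)]) (replicate (lam ! p - 1) (Suc p) @ [Suc (Suc (Suc p))])"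
  have s1: "F (Suc p) Y = Some A" unfolding Y_def A_def by (rule step1)
  have s2: "F (Suc (Suc p)) A = Some x" unfolding x_def A_def by (rule step2)
  have s3: "F (p) A = Some y" unfolding y_def A_def by (rule step3)
  have s4: "F (p) x = Some z2" unfolding x_def z2_def by (rule step4)
  have s5: "F (Suc (Suc p)) y = Some z2" unfolding y_def z2_def by (rule step5)
  have s6: "F (Suc p) x = Some x'" unfolding x_def x'_def by (rule step6)
  have s7: "F (p) x' = Some z1" unfolding x'_def z1_def by (rule step7)
  have s8: "F (Suc p) y = Some y'" unfolding y_def y'_def by (rule step8)
  have s9: "F (Suc (Suc p)) y' = Some z1" unfolding y'_def z1_def by (rule step9)
  have s10: "F (Suc p) z2 = Some W" unfolding z2_def W_def by (rule step10)
  have iA: "p \<in> {1..n}" "Suc p \<in> {1..n}" "Suc (Suc p) \<in> {1..n}" using p1 pl n by auto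
  have cs: "\<And>i T T'. i \<in> {1..n} \<Longrightarrow> F i T = Some T' \<Longrightarrow> crystal_le n T T'"
    unfolding crystal_le_def crystal_step_def by (rule r_into_rtranclp) blast
  have tr: "\<And>T T' T''. crystal_le n T T' \<Longrightarrow> crystal_le n T' T'' \<Longrightarrow> crystal_le n T T''"
    unfolding crystal_le_def by (rule rtranclp_trans)
  have xz2: "crystal_le n x z2" using cs[OF iA(1) s4] .
  have yz2: "crystal_le n y z2" using cs[OF iA(3) s5] .
  have xz1: "crystal_le n x z1" using tr[OF cs[OF iA(2) s6] cs[OF iA(1) s7]] .
  have yz1: "crystal_le n y z1" using tr[OF cs[OF iA(2) s8] cs[OF iA(3) s9]] .
  have inB: "x \<in> B lam n" "y \<in> B lam n" "z1 \<in> B lam n" "z2 \<in> B lam n"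
    unfolding x_def y_def z1_def z2_def using memx memy memz1 memz2 n by auto
  obtain s where s: "s \<in> B lam n" "crystal_le n x s" "crystal_le n y s"
    "\<forall>z\<in>B lam n. crystal_le n x z \<and> crystal_le n y z \<longrightarrow> crystal_le n s z"
    using lat inB(1,2) unfolding is_lattice_def by blast
  have sz1: "crystal_le n s z1" and sz2: "crystal_le n s z2" using s(4) inB xz1 yz1 xz2 yz2 by auto
  have cx: "\<And>k. cnt k x = cnt k A + (if k = Suc (Suc (Suc p)) then 1 else 0)" using F_cnt(1)[OF s2] by simp
  have cy: "\<And>k. cnt k y = cnt k A + (if k = Suc p then 1 else 0)" using F_cnt(1)[OF s3] by simp
  have cz2: "\<And>k. cnt k z2 = cnt k x + (if k = Suc p then 1 else 0)" using F_cnt(1)[OF s4] by simp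
  have cx': "\<And>k. cnt k x' = cnt k x + (if k = Suc (Suc p) then 1 else 0)" using F_cnt(1)[OF s6] by simp
  have cz1: "\<And>k. cnt k z1 = cnt k x' + (if k = Suc p then 1 else 0)" using F_cnt(1)[OF s7] by simp
  have tz: "tot z1 = Suc (tot z2)"
    using F_cnt(2)[OF s4] F_cnt(2)[OF s6] F_cnt(2)[OF s7] by simp
  have "s = z2"
  proof -
    obtain m where m: "(crystal_step n ^^ m) s z2" "0 < m \<longrightarrow> (\<exists>k. cnt k s < cnt k z2)"
      using le_cnt[OF sz2] by blast
    have "m = 0"
    proof (rule ccontr)
      assume "m \<noteq> 0"
      then obtain k where k: "cnt k s < cnt k z2" using m(2) by auto
      obtain m1 where "\<forall>k. cnt k x \<le> cnt k s" using le_cnt[OF s(2)] by blast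
      moreover obtain m2 where "\<forall>k. cnt k y \<le> cnt k s" using le_cnt[OF s(3)] by blast
      ultimately have "cnt k x \<le> cnt k s" "cnt k y \<le> cnt k s" by auto
      then show False using k cx[of k] cy[of k] cz2[of k] by (auto split: if_splits)
    qed
    then show ?thesis using m(1) by simp
  qed
  then have "crystal_le n z2 z1" using sz1 by simp
  then obtain m where m: "(crystal_step n ^^ m) z2 z1" "tot z1 = tot z2 + m"
    using le_cnt by blast
  then have "m = 1" using tz by simp
  then have "crystal_step n z2 z1" using m(1) by auto
  then obtain i where i: "F i z2 = Some z1" unfolding crystal_step_def by blast
  have "cnt (Suc (Suc p)) z1 = cnt (Suc (Suc p)) z2 + (if Suc (Suc p) = Suc i then 1 else 0)" using F_cnt(1)[OF i] .
  moreover have "cnt (Suc (Suc p)) z1 = Suc (cnt (Suc (Suc p)) z2)" using cz1 cx' cz2 by simp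
  ultimately have "i = Suc p" by (auto split: if_splits)
  then have "W = z1" using i s10 by simp
  then have "mk lam p (replicate (lam ! (p - 1) - 1) p @ [Suc (Suc p)]) (replicate (lam ! p - 1) (Suc p) @ [Suc (Suc (Suc p))]) ! (p - 1) = mk lam p (replicate (lam ! (p - 1) - 1) p @ [Suc p]) (replicate (lam ! p - 2) (Suc p) @ [Suc (Suc p), Suc (Suc (Suc p))]) ! (p - 1)"
    unfolding W_def z1_def by simp
  then show False using pl by (simp add: nth_mk)
qed

end


theorem lemma5p6:
  fixes lam :: "nat list" and n p :: nat
  assumes "is_partition lam"
    and "length lam \<le> n"
    and "1 \<le> p" and "p \<le> length lam - 2"
    and "lam ! (p - 1) \<ge> lam ! p"
    and "lam ! p \<ge> lam ! (p + 1) + 2"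
  shows "\<not> is_lattice (B lam n) (crystal_le n)"
proof -
  have pl: "Suc p < length lam" using assms(3,4) by simp
  have L12: "lam ! Suc p + 2 \<le> lam ! p" using assms(6) by simp
  show ?thesis by (rule nolat[OF assms(1,3) pl assms(5) L12 assms(2)])
qed

end
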